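(* Let $n\ge2$, let $\mathcal{S}=\{\boldsymbol{\sigma}(\mathbf{t}):\mathbf{t}\in D\}$ be a rationally parameterisable hypersurface in $\mathbb{R}^n$ and let $O\subseteq D\setminus\sigma_1^{-1}(0)$ be open in $\mathbb{R}^{n-1}$. Suppose there is $\mathbf{t}\in O$ such that \[\det\left(\frac{\partial\overline{\boldsymbol{\sigma}}(\mathbf{t})}{\partial\mathbf{t}}\right)\neq0,\] where $\overline{\boldsymbol{\sigma}}=(\sigma_1,\dots,\sigma_{n-1})^T$, and such that for the point $\mathbf{s}=\boldsymbol{\sigma}(\mathbf{t})\in\mathcal{S}$ there is no neighborhood $U$ of $1$ in $\mathbb{R}$ with $\lambda\mathbf{s}\in\mathcal{S}$ for all $\lambda\in U$. Then $O$ satisfies the inner point condition.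
   Context: An rp-hypersurface is $\mathcal{S}=\{\boldsymbol{\sigma}(\mathbf{t}):\mathbf{t}\in D\}$ with $\boldsymbol{\sigma}=(\sigma_1,\dots,\sigma_n)^T$ having rational functions of $\mathbf{t}=(t_1,\dots,t_{n-1})$ as components and $D\subseteq\mathbb{R}^{n-1}$ a set where they are defined. $\frac{\partial\overline{\boldsymbol{\sigma}}(\mathbf{t})}{\partial\mathbf{t}}$ denotes the $(n-1)\times(n-1)$ Jacobian matrix of $\overline{\boldsymbol{\sigma}}$. $\hat{\boldsymbol{\sigma}}(\mathbf{t})=(\sigma_2(\mathbf{t})/\sigma_1(\mathbf{t}),\dots,\sigma_n(\mathbf{t})/\sigma_1(\mathbf{t}))^T$ for $\mathbf{t}\in D\setminus\sigma_1^{-1}(0)$. The inner point condition for $O$ means: there is $\mathbf{t}'\in O$ such that $\hat{\boldsymbol{\sigma}}(\mathbf{t}')$ is an interior point of $\hat{\boldsymbol{\sigma}}(O)=\{\hat{\boldsymbol{\sigma}}(\mathbf{u}):\mathbf{u}\in O\}$ in $\mathbb{R}^{n-1}$. *)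

theory Defs
  imports "HOL-Analysis.Analysis"
begin

inductive polyfun :: "(real^'m \<Rightarrow> real) \<Rightarrow> bool" where
  const: "polyfun (\<lambda>t. c)"
| coord: "polyfun (\<lambda>t. t $ i)"
| add: "polyfun p \<Longrightarrow> polyfun q \<Longrightarrow> polyfun (\<lambda>t. p t + q t)"
| mult: "polyfun p \<Longrightarrow> polyfun q \<Longrightarrow> polyfun (\<lambda>t. p t * q t)"

definition rational_on :: "(real^'m) set \<Rightarrow> (real^'m \<Rightarrow> real) \<Rightarrow> bool" where
  "rational_on D f \<longleftrightarrow> (\<exists>p q. polyfun p \<and> polyfun q \<and>
      (\<forall>t\<in>D. q t \<noteq> 0 \<and> f t = p t / q t))"

text \<open>Points of R^n are indexed by 'm option: None is coordinate 1, Some i are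
  coordinates 2..n (so n = CARD('m) + 1 \<ge> 2); parameters t range over R^(n-1) = real^'m.\<close>
definition rp_param :: "(real^'m \<Rightarrow> real^('m option)) \<Rightarrow> (real^'m) set \<Rightarrow> bool" where
  "rp_param \<sigma> D \<longleftrightarrow> (\<forall>k. rational_on D (\<lambda>t. \<sigma> t $ k))"

definition rp_surface :: "(real^'m \<Rightarrow> real^('m option)) \<Rightarrow> (real^'m) set \<Rightarrow> (real^('m option)) set" where
  "rp_surface \<sigma> D = \<sigma> ` D"

definition sigma_hat :: "(real^'m \<Rightarrow> real^('m option)) \<Rightarrow> real^'m \<Rightarrow> real^'m" where
  "sigma_hat \<sigma> t = (\<chi> i. \<sigma> t $ Some i / \<sigma> t $ None)"

text \<open>sigma-bar = (sigma_1, ..., sigma_{n-1}): the coordinate l is the one playing the role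
  of the last coordinate sigma_n; it is dropped and sigma_1 put in its slot (a permutation
  of the output coordinates, irrelevant for the nonvanishing of the Jacobian determinant).\<close>
definition sigma_bar :: "'m \<Rightarrow> (real^'m \<Rightarrow> real^('m option)) \<Rightarrow> real^'m \<Rightarrow> real^'m" where
  "sigma_bar l \<sigma> t = (\<chi> i. if i = l then \<sigma> t $ None else \<sigma> t $ Some i)"

definition inner_point_condition :: "(real^'m \<Rightarrow> real^('m option)) \<Rightarrow> (real^'m) set \<Rightarrow> bool" where
  "inner_point_condition \<sigma> V \<longleftrightarrow> (\<exists>t'\<in>V. sigma_hat \<sigma> t' \<in> interior (sigma_hat \<sigma> ` V))"

end

theory Submission
  imports Defs
begin

lemma polyfun_deriv:
  fixes p :: "real^'m \<Rightarrow> real"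
  assumes "polyfun p"
  shows "\<exists>g. continuous_on UNIV g \<and> (\<forall>t. (p has_derivative (\<lambda>h. g t \<bullet> h)) (at t))"
  using assms
proof induction
  case (const c)
  show ?case by (rule exI[of _ "\<lambda>t. 0"]) auto
next
  case (coord i)
  show ?case
    apply (rule exI[of _ "\<lambda>t. axis i 1"])
    apply (auto simp: inner_axis')
    by (metis bounded_linear_imp_has_derivative bounded_linear_vec_nth)
next
  case (add p q)
  then obtain gp gq where "continuous_on UNIV gp" "\<forall>t. (p has_derivative (\<lambda>h. gp t \<bullet> h)) (at t)"
    "continuous_on UNIV gq" "\<forall>t. (q has_derivative (\<lambda>h. gq t \<bullet> h)) (at t)" by blast
  then show ?case
    by (intro exI[of _ "\<lambda>t. gp t + gq t"]) (auto intro!: continuous_intros derivative_eq_intros simp: inner_add_left)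
next
  case (mult p q)
  then obtain gp gq where c1: "continuous_on UNIV gp" and d1: "\<forall>t. (p has_derivative (\<lambda>h. gp t \<bullet> h)) (at t)"
    and c2: "continuous_on UNIV gq" and d2: "\<forall>t. (q has_derivative (\<lambda>h. gq t \<bullet> h)) (at t)" by blast
  have cp: "continuous_on UNIV p"
    using d1 by (meson continuous_at_imp_continuous_on has_derivative_continuous)
  have cq: "continuous_on UNIV q"
    using d2 by (meson continuous_at_imp_continuous_on has_derivative_continuous)
  show ?case
  proof (intro exI[of _ "\<lambda>t. q t *\<^sub>R gp t + p t *\<^sub>R gq t"] conjI allI)
    show "continuous_on UNIV (\<lambda>t. q t *\<^sub>R gp t + p t *\<^sub>R gq t)"
      by (intro continuous_intros c1 c2 cp cq)
    fix t
    show "((\<lambda>t. p t * q t) has_derivative (\<lambda>h. (q t *\<^sub>R gp t + p t *\<^sub>R gq t) \<bullet> h)) (at t)"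
      apply (rule has_derivative_eq_rhs[OF has_derivative_mult[OF d1[rule_format] d2[rule_format]]])
      by (auto simp: inner_add_left algebra_simps)
  qed
qed

lemma polyfun_cont:
  fixes p :: "real^'m \<Rightarrow> real"
  assumes "polyfun p"
  shows "continuous_on UNIV p"
  using polyfun_deriv[OF assms]
  by (meson continuous_at_imp_continuous_on has_derivative_continuous)

lemma rational_deriv:
  fixes f :: "real^'m \<Rightarrow> real"
  assumes "rational_on D f" "open V" "V \<subseteq> D"
  shows "\<exists>g. continuous_on V g \<and> (\<forall>t\<in>V. (f has_derivative (\<lambda>h. g t \<bullet> h)) (at t))"
proof -
  obtain p q where pq: "polyfun p" "polyfun q" "\<forall>t\<in>D. q t \<noteq> 0 \<and> f t = p t / q t"
    using assms(1) unfolding rational_on_def by blast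
  obtain gp where c1: "continuous_on UNIV gp" and d1: "\<forall>t. (p has_derivative (\<lambda>h. gp t \<bullet> h)) (at t)"
    using polyfun_deriv[OF pq(1)] by blast
  obtain gq where c2: "continuous_on UNIV gq" and d2: "\<forall>t. (q has_derivative (\<lambda>h. gq t \<bullet> h)) (at t)"
    using polyfun_deriv[OF pq(2)] by blast
  have cp: "continuous_on V p" by (rule continuous_on_subset[OF polyfun_cont[OF pq(1)]]) simp
  have cq: "continuous_on V q" by (rule continuous_on_subset[OF polyfun_cont[OF pq(2)]]) simp
  have qnz: "\<And>t. t \<in> V \<Longrightarrow> q t \<noteq> 0" using pq(3) assms(3) by (meson subsetD)
  show ?thesis
  proof (intro exI[of _ "\<lambda>t. inverse (q t ^ 2) *\<^sub>R (q t *\<^sub>R gp t - p t *\<^sub>R gq t)"] conjI ballI)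
    show "continuous_on V (\<lambda>t. inverse (q t ^ 2) *\<^sub>R (q t *\<^sub>R gp t - p t *\<^sub>R gq t))"
      by (intro continuous_intros cp cq continuous_on_subset[OF c1] continuous_on_subset[OF c2]) (auto simp: qnz)
    fix t assume t: "t \<in> V"
    have "((\<lambda>t. p t / q t) has_derivative (\<lambda>h. (inverse (q t ^ 2) *\<^sub>R (q t *\<^sub>R gp t - p t *\<^sub>R gq t)) \<bullet> h)) (at t)"
      apply (rule has_derivative_eq_rhs[OF has_derivative_divide[OF d1[rule_format] d2[rule_format] qnz[OF t]]])
    proof
      fix h
      have "q t \<noteq> 0" using qnz[OF t] .
      then show "- p t * (inverse (q t) * (gq t \<bullet> h) * inverse (q t)) + (gp t \<bullet> h) / q t =
         (inverse (q t ^ 2) *\<^sub>R (q t *\<^sub>R gp t - p t *\<^sub>R gq t)) \<bullet> h"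
        unfolding inner_diff_left inner_scaleR_left by (simp add: field_simps power2_eq_square)
    qed
    then show "(f has_derivative (\<lambda>h. (inverse (q t ^ 2) *\<^sub>R (q t *\<^sub>R gp t - p t *\<^sub>R gq t)) \<bullet> h)) (at t)"
      by (rule has_derivative_transform_within_open[OF _ assms(2) t]) (use pq(3) assms(3) in auto)
  qed
qed

lemma has_derivative_vec_comp:
  fixes f :: "'a::real_normed_vector \<Rightarrow> real^'n"
  assumes "\<And>k. ((\<lambda>x. f x $ k) has_derivative (\<lambda>h. f' h $ k)) (at x)"
  shows "(f has_derivative f') (at x)"
  apply (rule iffD2[OF has_derivative_componentwise_within])
  using assms by (auto simp: Basis_vec_def inner_axis)

theorem theorem6:
  fixes \<sigma> :: "real^'m \<Rightarrow> real^('m option)"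
    and D V :: "(real^'m) set"
    and l :: 'm
  assumes rp: "rp_param \<sigma> D"
    and O_open: "open V"
    and O_sub: "V \<subseteq> D - {t. \<sigma> t $ None = 0}"
    and t_in: "t \<in> V"
    and jac: "det (jacobian (sigma_bar l \<sigma>) (at t)) \<noteq> 0"
    and no_nbhd: "\<not> (\<exists>U. open U \<and> (1::real) \<in> U \<and>
                        (\<forall>c\<in>U. c *\<^sub>R \<sigma> t \<in> rp_surface \<sigma> D))"
  shows "inner_point_condition \<sigma> V"
proof (rule ccontr)
  assume nip: "\<not> inner_point_condition \<sigma> V"
  have VD: "V \<subseteq> D" using O_sub by blast
  have s1nz: "\<And>x. x \<in> V \<Longrightarrow> \<sigma> x $ None \<noteq> 0" using O_sub by blast
  have "\<forall>k. \<exists>g. continuous_on V g \<and> (\<forall>x\<in>V. ((\<lambda>s. \<sigma> s $ k) has_derivative (\<lambda>h. g x \<bullet> h)) (at x))"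
    using rp unfolding rp_param_def by (metis rational_deriv[OF _ O_open VD])
  then obtain d where dcont: "\<And>k. continuous_on V (d k)"
    and dder: "\<And>k x. x \<in> V \<Longrightarrow> ((\<lambda>s. \<sigma> s $ k) has_derivative (\<lambda>h. d k x \<bullet> h)) (at x)"
    by metis
  define bar :: "real^('m option) \<Rightarrow> real^'m" where
    "bar z = (\<chi> i. if i = l then z $ None else z $ Some i)" for z
  define DS where "DS x h = (\<chi> k. d k x \<bullet> h)" for x h
  define B where "B x h = bar (DS x h)" for x h
  have sb: "sigma_bar l \<sigma> x = bar (\<sigma> x)" for x
    by (simp add: sigma_bar_def bar_def)
  have B_eq: "B x h = (\<chi> i. (if i = l then d None x else d (Some i) x) \<bullet> h)" for x h
    by (simp add: B_def bar_def DS_def vec_eq_iff)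
  have linDS: "linear (DS x)" for x
    by (rule linearI) (simp_all add: DS_def vec_eq_iff inner_add_right)
  have linbar: "linear bar"
    by (rule linearI) (simp_all add: bar_def vec_eq_iff)
  have linB: "linear (B x)" for x
    unfolding B_def using linear_compose[OF linDS linbar] by (simp add: o_def)
  have blB: "bounded_linear (B x)" for x
    using linB linear_conv_bounded_linear by blast
  have derS: "(\<sigma> has_derivative DS x) (at x)" if "x \<in> V" for x
    by (rule has_derivative_vec_comp) (simp add: DS_def dder[OF that])
  have derB: "(sigma_bar l \<sigma> has_derivative B x) (at x)" if "x \<in> V" for x
  proof -
    have "((\<lambda>x. bar (\<sigma> x)) has_derivative (\<lambda>h. bar (DS x h))) (at x)"
      using bounded_linear.has_derivative[OF linbar[unfolded linear_conv_bounded_linear] derS[OF that]] .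
    moreover have "sigma_bar l \<sigma> = (\<lambda>x. bar (\<sigma> x))" by (rule ext) (simp add: sb)
    moreover have "B x = (\<lambda>h. bar (DS x h))" by (rule ext) (simp add: B_def)
    ultimately show ?thesis by simp
  qed
  have injBt: "inj (B t)"
  proof -
    have "frechet_derivative (sigma_bar l \<sigma>) (at t) = B t"
      using frechet_derivative_at[OF derB[OF t_in]] by simp
    then show ?thesis using jac det_nz_iff_inj[OF linB] unfolding jacobian_def by simp
  qed
  have contBd: "continuous_on V (\<lambda>x. Blinfun (B x))"
  proof (rule continuous_on_blinfun_componentwise)
    fix i :: "real^'m"
    have cif: "continuous_on V (\<lambda>x. if j = l then d None x else d (Some j) x)" for j
      by (cases "j = l") (simp_all add: dcont)
    have "continuous_on V (\<lambda>x. B x i)"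
      unfolding B_eq
        by (intro continuous_on_vec_lambda continuous_on_inner continuous_on_const cif)
    then show "continuous_on V (\<lambda>x. blinfun_apply (Blinfun (B x)) i)"
      by (simp add: bounded_linear_Blinfun_apply[OF blB])
  qed
  obtain g0 where g0: "linear g0" "g0 \<circ> B t = id"
    using linear_injective_left_inverse[OF linB injBt] by blast
  have invf: "Blinfun g0 o\<^sub>L Blinfun (B t) = id_blinfun"
    apply (rule blinfun_eqI)
    using g0 by (simp add: bounded_linear_Blinfun_apply[OF blB] bounded_linear_Blinfun_apply linear_conv_bounded_linear[symmetric] fun_eq_iff)
  obtain U' W g g' where U': "open U'" "U' \<subseteq> V" "t \<in> U'" and W: "open W" "sigma_bar l \<sigma> t \<in> W"
    and hom: "homeomorphism U' W (sigma_bar l \<sigma>) g"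
    and gder: "\<And>y. y \<in> W \<Longrightarrow> (g has_derivative (g' y)) (at y)"
    and g'eq: "\<And>y. y \<in> W \<Longrightarrow> g' y = inv (B (g y))"
    and bijB: "\<And>y. y \<in> W \<Longrightarrow> bij (B (g y))"
    apply (rule inverse_function_theorem[where f = "sigma_bar l \<sigma>", OF O_open _ contBd t_in invf])
     apply (simp add: bounded_linear_Blinfun_apply[OF blB] derB)
    apply (rule that; assumption?)
    apply (simp_all add: bounded_linear_Blinfun_apply[OF blB])
    done
  define H where "H y h = (\<chi> i. (\<sigma> y $ None * (d (Some i) y \<bullet> h) - \<sigma> y $ Some i * (d None y \<bullet> h)) / (\<sigma> y $ None)^2)" for y h
  have linH: "linear (H y)" for y
    by (rule linearI) (simp_all add: H_def vec_eq_iff inner_add_right inner_scaleR_right algebra_simps add_divide_distrib diff_divide_distrib)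
  have derH: "(sigma_hat \<sigma> has_derivative H y) (at y)" if y: "y \<in> V" for y
  proof -
    have shf: "sigma_hat \<sigma> = (\<lambda>s. \<chi> i. \<sigma> s $ Some i / \<sigma> s $ None)"
      by (rule ext) (simp add: sigma_hat_def)
    show ?thesis unfolding shf
    proof (rule has_derivative_vec_comp)
      fix i
      have b: "\<sigma> y $ None \<noteq> 0" using s1nz[OF y] .
      show "((\<lambda>s. (\<chi> i. \<sigma> s $ Some i / \<sigma> s $ None) $ i) has_derivative (\<lambda>h. H y h $ i)) (at y)"
        apply simp
        apply (rule has_derivative_eq_rhs[OF has_derivative_divide[OF dder[OF y] dder[OF y] b]])
        apply (rule ext)
        using b by (simp add: H_def field_simps power2_eq_square)
    qed
  qed
  have contH: "continuous_on V (sigma_hat \<sigma>)"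
    using derH by (meson continuous_at_imp_continuous_on has_derivative_continuous)
  have radial: "\<exists>u. DS x u = \<sigma> x" if x: "x \<in> V" and injx: "inj (B x)" for x
  proof -
    have nsurj: "\<not> surj (H x)"
    proof
      assume "surj (H x)"
      then obtain g' where g': "linear g'" "H x \<circ> g' = id"
        using linear_surjective_right_inverse[OF linH] by blast
      have "sigma_hat \<sigma> x \<in> interior (sigma_hat \<sigma> ` V)"
        by (rule sussmann_open_mapping[OF O_open contH x derH[OF x] _ g'(2) subset_refl])
           (use g'(1) x O_open in \<open>simp_all add: linear_conv_bounded_linear interior_open\<close>)
      then show False using nip x unfolding inner_point_condition_def by blast
    qed
    have "\<not> inj (H x)"
      using nsurj linear_injective_imp_surjective[OF linH] by auto
    then obtain v where v: "H x v = 0" "v \<noteq> 0"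
      using linear_injective_0[OF linH] by blast
    have b: "\<sigma> x $ None \<noteq> 0" using s1nz[OF x] .
    have comp: "\<sigma> x $ None * (d (Some i) x \<bullet> v) = \<sigma> x $ Some i * (d None x \<bullet> v)" for i
    proof -
      have "H x v $ i = 0" using v(1) by simp
      then show ?thesis using b by (simp add: H_def)
    qed
    define \<mu> where "\<mu> = (d None x \<bullet> v) / \<sigma> x $ None"
    have DSv: "DS x v = \<mu> *\<^sub>R \<sigma> x"
    proof (subst vec_eq_iff, rule allI)
      fix k show "DS x v $ k = (\<mu> *\<^sub>R \<sigma> x) $ k"
      proof (cases k)
        case None then show ?thesis using b by (simp add: DS_def \<mu>_def)
      next
        case (Some i) then show ?thesis using b comp[of i] by (simp add: DS_def \<mu>_def field_simps)
      qed
    qed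
    have "\<mu> \<noteq> 0"
    proof
      assume "\<mu> = 0"
      then have "B x v = B x 0"
        using DSv linear_0[OF linB] linear_0[OF linbar] by (simp add: B_def)
      then show False using injx v(2) by (meson injD)
    qed
    then have "DS x (inverse \<mu> *\<^sub>R v) = \<sigma> x"
      using DSv linear_cmul[OF linDS] by simp
    then show ?thesis by blast
  qed
  define a where "a = sigma_bar l \<sigma> t"
  obtain e where e: "e > 0" "ball a e \<subseteq> W"
    using W open_contains_ball unfolding a_def by blast
  define r where "r = min (1/2) (e / (norm a + 1))"
  have na: "norm a + 1 > 0" by (simp add: add_nonneg_pos)
  have r: "r > 0" using e na by (simp add: r_def)
  define J where "J = ball (1::real) r"
  have cpos: "c > 0" if "c \<in> J" for c
  proof -
    have "\<bar>1 - c\<bar> < 1/2" using that by (simp add: J_def r_def dist_real_def)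
    then show ?thesis by linarith
  qed
  have cW: "c *\<^sub>R a \<in> W" if c: "c \<in> J" for c
  proof -
    have d1: "\<bar>1 - c\<bar> < r" using c by (simp add: J_def dist_real_def)
    have "dist a (c *\<^sub>R a) = \<bar>1 - c\<bar> * norm a"
    proof -
      have "a - c *\<^sub>R a = (1 - c) *\<^sub>R a" by (simp add: scaleR_diff_left)
      then show ?thesis by (simp add: dist_norm)
    qed
    also have "\<dots> \<le> r * norm a" using d1 by (simp add: mult_right_mono)
    also have "\<dots> \<le> e / (norm a + 1) * norm a" by (rule mult_right_mono) (simp_all add: r_def)
    also have "\<dots> < e" using e(1) na by (simp add: field_simps)
    finally show ?thesis using e(2) by auto
  qed
  define \<tau> where "\<tau> c = g (c *\<^sub>R a)" for c
  have \<tau>U: "\<tau> c \<in> U'" if "c \<in> J" for c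
    using homeomorphism_image2[OF hom] cW[OF that] unfolding \<tau>_def by blast
  have \<tau>V: "\<tau> c \<in> V" if "c \<in> J" for c using \<tau>U[OF that] U'(2) by blast
  have sb\<tau>: "sigma_bar l \<sigma> (\<tau> c) = c *\<^sub>R a" if "c \<in> J" for c
    using homeomorphism_apply2[OF hom cW[OF that]] unfolding \<tau>_def .
  define w where "w c = inv (B (\<tau> c)) a" for c
  have bij\<tau>: "bij (B (\<tau> c))" if "c \<in> J" for c using bijB[OF cW[OF that]] unfolding \<tau>_def .
  have Bw: "B (\<tau> c) (w c) = a" if "c \<in> J" for c
    unfolding w_def using bij\<tau>[OF that] by (simp add: bij_is_surj surj_f_inv_f)
  have der\<tau>: "(\<tau> has_derivative (\<lambda>x. x *\<^sub>R w c)) (at c)" if c: "c \<in> J" for c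
  proof -
    have 1: "((\<lambda>c. c *\<^sub>R a) has_derivative (\<lambda>x. x *\<^sub>R a)) (at c)"
      by (rule bounded_linear_imp_has_derivative[OF bounded_linear_scaleR_left])
    have 2: "(g has_derivative inv (B (\<tau> c))) (at (c *\<^sub>R a))"
      using gder[OF cW[OF c]] g'eq[OF cW[OF c]] by (simp add: \<tau>_def)
    have eq: "inv (B (\<tau> c)) (x *\<^sub>R a) = x *\<^sub>R w c" for x
    proof -
      have "B (\<tau> c) (x *\<^sub>R w c) = x *\<^sub>R a" using Bw[OF c] linear_cmul[OF linB] by simp
      then show ?thesis using bij\<tau>[OF c] by (metis bij_is_inj inv_f_f)
    qed
    have "((g \<circ> (\<lambda>c. c *\<^sub>R a)) has_derivative (inv (B (\<tau> c)) \<circ> (\<lambda>x. x *\<^sub>R a))) (at c)"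
      by (rule diff_chain_at[OF 1 2])
    moreover have "\<tau> = g \<circ> (\<lambda>c. c *\<^sub>R a)" by (rule ext) (simp add: \<tau>_def)
    ultimately have "(\<tau> has_derivative (inv (B (\<tau> c)) \<circ> (\<lambda>x. x *\<^sub>R a))) (at c)" by simp
    then show ?thesis by (rule has_derivative_eq_rhs) (simp add: o_def eq)
  qed
  have DSw: "DS (\<tau> c) (w c) = inverse c *\<^sub>R \<sigma> (\<tau> c)" if c: "c \<in> J" for c
  proof -
    obtain u where u: "DS (\<tau> c) u = \<sigma> (\<tau> c)"
      using radial[OF \<tau>V[OF c] bij_is_inj[OF bij\<tau>[OF c]]] by blast
    have "B (\<tau> c) u = c *\<^sub>R a" using u sb\<tau>[OF c] by (simp add: B_def sb)
    also have "\<dots> = B (\<tau> c) (c *\<^sub>R w c)" using Bw[OF c] linear_cmul[OF linB] by simp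
    finally have "u = c *\<^sub>R w c" using bij_is_inj[OF bij\<tau>[OF c]] by (meson injD)
    then have "\<sigma> (\<tau> c) = c *\<^sub>R DS (\<tau> c) (w c)" using u linear_cmul[OF linDS] by simp
    then show ?thesis using cpos[OF c] by simp
  qed
  define F where "F c = inverse c *\<^sub>R \<sigma> (\<tau> c)" for c
  have derF: "(F has_derivative (\<lambda>x. 0)) (at c)" if c: "c \<in> J" for c
  proof -
    have c0: "c \<noteq> 0" using cpos[OF c] by simp
    have 1: "((\<sigma> \<circ> \<tau>) has_derivative (DS (\<tau> c) \<circ> (\<lambda>x. x *\<^sub>R w c))) (at c)"
      by (rule diff_chain_at[OF der\<tau>[OF c] derS[OF \<tau>V[OF c]]])
    have 2: "(inverse has_derivative (\<lambda>h. - (inverse c * h * inverse c))) (at c)"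
      by (rule has_derivative_inverse'[OF c0])
    have 3: "((\<lambda>x. inverse x *\<^sub>R (\<sigma> \<circ> \<tau>) x) has_derivative
       (\<lambda>h. inverse c *\<^sub>R (DS (\<tau> c) \<circ> (\<lambda>x. x *\<^sub>R w c)) h + (- (inverse c * h * inverse c)) *\<^sub>R (\<sigma> \<circ> \<tau>) c)) (at c)"
      by (rule has_derivative_scaleR[OF 2 1])
    show ?thesis
      unfolding F_def
      apply (rule has_derivative_eq_rhs[OF 3[simplified o_def]])
      apply (rule ext)
      using DSw[OF c] linear_cmul[OF linDS] by (simp add: scaleR_scaleR algebra_simps)
  qed
  obtain C where C: "\<And>x. x \<in> J \<Longrightarrow> F x = C"
    using has_derivative_zero_constant[of J F] derF convex_ball[of 1 r]
    unfolding J_def by (metis has_derivative_at_withinI)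
  have oneJ: "1 \<in> J" using r by (simp add: J_def)
  have \<tau>1: "\<tau> 1 = t" using homeomorphism_apply1[OF hom U'(3)] by (simp add: \<tau>_def a_def)
  have F1: "F 1 = \<sigma> t" by (simp add: F_def \<tau>1)
  have "c *\<^sub>R \<sigma> t \<in> rp_surface \<sigma> D" if c: "c \<in> J" for c
  proof -
    have "F c = \<sigma> t" using C[OF c] C[OF oneJ] F1 by simp
    then have "c *\<^sub>R F c = c *\<^sub>R \<sigma> t" by simp
    then have "\<sigma> (\<tau> c) = c *\<^sub>R \<sigma> t" using cpos[OF c] by (simp add: F_def scaleR_scaleR)
    then show ?thesis using \<tau>V[OF c] VD unfolding rp_surface_def by (metis image_eqI subsetD)
  qed
  then show False using no_nbhd oneJ unfolding J_def by blast
qed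

end
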